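(* Suppose $\lambda_1=0$ and $\beta$ satisfies condition $(E)$. Let $\varphi$ be an entire function such that the composition operator $C_\varphi f=f\circ\varphi$ maps $\mathcal{H}(E,\beta)$ into itself and is bounded. Then exactly one of the following holds: (i) $\varphi$ is constant; or (ii) $\varphi(z)=z+b$ for some $b\in\mathbb{C}$ with $\operatorname{Re}(b)\ge0$.
   Context: Fix a sequence $\Lambda=(\lambda_n)_{n\ge1}$ of real numbers with $0\le\lambda_1<\lambda_2<\cdots$ and $\lambda_n\to+\infty$, such that $\limsup_{n\to\infty}\frac{\log n}{\lambda_n}<+\infty$. For a sequence $\beta=(\beta_n)$ of positive reals, condition $(E)$ is: $\liminf_{n\to\infty}\frac{\log\beta_n}{\lambda_n}=+\infty$. Under $(E)$, $\mathcal{H}(E,\beta)$ denotes the Hilbert space of entire functions $f(z)=\sum_{n=1}^\infty a_ne^{-\lambda_nz}$ ($a_n\in\mathbb{C}$; the representation is unique) with norm $\|f\|=\big(\sum_{n=1}^\infty|a_n|^2\beta_n^2\big)^{1/2}<\infty$. When $\lambda_1=0$ this space contains the constant functions. *)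

theory Defs
  imports "HOL-Analysis.Analysis"
begin

text \<open>Sequences are indexed from 0: lam 0 plays the role of lambda_1, etc.\<close>

definition frequency_seq :: "(nat \<Rightarrow> real) \<Rightarrow> bool" where
  "frequency_seq lam \<longleftrightarrow> lam 0 \<ge> 0 \<and> strict_mono lam \<and> filterlim lam at_top sequentially
     \<and> Limsup sequentially (\<lambda>n. ereal (ln (real (Suc n)) / lam n)) < \<infinity>"

definition condition_E :: "(nat \<Rightarrow> real) \<Rightarrow> (nat \<Rightarrow> real) \<Rightarrow> bool" where
  "condition_E lam beta \<longleftrightarrow> (\<forall>n. beta n > 0)
     \<and> Liminf sequentially (\<lambda>n. ereal (ln (beta n) / lam n)) = \<infinity>"

definition dirichlet_rep :: "(nat \<Rightarrow> real) \<Rightarrow> (nat \<Rightarrow> complex) \<Rightarrow> (complex \<Rightarrow> complex) \<Rightarrow> bool" where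
  "dirichlet_rep lam a f \<longleftrightarrow> (\<forall>z. (\<lambda>n. a n * exp (- complex_of_real (lam n) * z)) sums f z)"

definition HE_coeffs :: "(nat \<Rightarrow> real) \<Rightarrow> (nat \<Rightarrow> real) \<Rightarrow> (complex \<Rightarrow> complex) \<Rightarrow> (nat \<Rightarrow> complex) \<Rightarrow> bool" where
  "HE_coeffs lam beta f a \<longleftrightarrow> summable (\<lambda>n. (cmod (a n))\<^sup>2 * (beta n)\<^sup>2) \<and> dirichlet_rep lam a f"

definition in_HE :: "(nat \<Rightarrow> real) \<Rightarrow> (nat \<Rightarrow> real) \<Rightarrow> (complex \<Rightarrow> complex) \<Rightarrow> bool" where
  "in_HE lam beta f \<longleftrightarrow> (\<exists>a. HE_coeffs lam beta f a)"

text \<open>Norm in H(E,beta) (the representation is unique, so SOME picks the coefficients).\<close>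
definition HE_norm :: "(nat \<Rightarrow> real) \<Rightarrow> (nat \<Rightarrow> real) \<Rightarrow> (complex \<Rightarrow> complex) \<Rightarrow> real" where
  "HE_norm lam beta f = sqrt (\<Sum>n. (cmod ((SOME a. HE_coeffs lam beta f a) n))\<^sup>2 * (beta n)\<^sup>2)"

definition bounded_composition :: "(nat \<Rightarrow> real) \<Rightarrow> (nat \<Rightarrow> real) \<Rightarrow> (complex \<Rightarrow> complex) \<Rightarrow> bool" where
  "bounded_composition lam beta \<phi> \<longleftrightarrow>
     (\<forall>f. in_HE lam beta f \<longrightarrow> in_HE lam beta (f \<circ> \<phi>)) \<and>
     (\<exists>C. \<forall>f. in_HE lam beta f \<longrightarrow> HE_norm lam beta (f \<circ> \<phi>) \<le> C * HE_norm lam beta f)"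

end

theory Submission
  imports Defs "HOL-Complex_Analysis.Complex_Analysis"
begin


definition K2 :: "(nat \<Rightarrow> real) \<Rightarrow> (nat \<Rightarrow> real) \<Rightarrow> real \<Rightarrow> real" where
  "K2 lam beta x = (\<Sum>n. exp (-2 * lam n * x) / (beta n)\<^sup>2)"

lemma K2_summable:
  assumes F: "frequency_seq lam" and E: "condition_E lam beta"
  shows "summable (\<lambda>n. exp (-2 * lam n * x) / (beta n)\<^sup>2)"
proof -
  have sm: "strict_mono lam" and l0: "lam 0 \<ge> 0" and ls: "Limsup sequentially (\<lambda>n. ereal (ln (real (Suc n)) / lam n)) < \<infinity>"
    using F by (auto simp: frequency_seq_def)
  have bpos: "\<And>n. beta n > 0" and li: "Liminf sequentially (\<lambda>n. ereal (ln (beta n) / lam n)) = \<infinity>"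
    using E by (auto simp: condition_E_def)
  obtain k :: nat where "Limsup sequentially (\<lambda>n. ereal (ln (real (Suc n)) / lam n)) < ereal (real k)"
    using ls less_PInf_Ex_of_nat by auto
  then have ev1: "eventually (\<lambda>n. ereal (ln (real (Suc n)) / lam n) < ereal (real k)) sequentially"
    by (rule Limsup_lessD)
  define M where "M = \<bar>x\<bar> + real k + 1"
  have ev2: "eventually (\<lambda>n. ereal (ln (beta n) / lam n) > ereal M) sequentially"
    by (rule less_LiminfD) (simp add: li)
  have ev3: "eventually (\<lambda>n. lam n > 0) sequentially"
  proof -
    have "\<And>n. n \<ge> 1 \<Longrightarrow> lam n > 0"
      proof - fix n :: nat assume "n \<ge> 1" then have "lam 0 < lam n" using sm by (simp add: strict_mono_less) then show "lam n > 0" using l0 by linarith qed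
    then show ?thesis unfolding eventually_sequentially by blast
  qed
  have "eventually (\<lambda>n. norm (exp (-2 * lam n * x) / (beta n)\<^sup>2) \<le> inverse (real (Suc n) ^ 2)) sequentially"
    using ev1 ev2 ev3
  proof eventually_elim
    case (elim n)
    have A: "ln (real (Suc n)) < real k * lam n" using elim by (simp add: divide_less_eq)
    have B: "M * lam n < ln (beta n)" using elim by (simp add: less_divide_eq)
    have "-2 * lam n * x - 2 * ln (beta n) \<le> -2 * ln (real (Suc n))"
    proof -
      have "-2 * lam n * x \<le> 2 * lam n * \<bar>x\<bar>" proof -
        have "- x \<le> \<bar>x\<bar>" by simp
        then have "2 * lam n * (- x) \<le> 2 * lam n * \<bar>x\<bar>" using elim(3) by (intro mult_left_mono) auto
        then show ?thesis by simp
      qed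
      moreover have "2 * lam n * \<bar>x\<bar> - 2 * ln (beta n) \<le> - 2 * real k * lam n - 2 * lam n"
        using B elim(3) unfolding M_def by (simp add: algebra_simps)
      ultimately show ?thesis using A elim(3) by linarith
    qed
    then have X: "exp (-2 * lam n * x - 2 * ln (beta n)) \<le> exp (-2 * ln (real (Suc n)))" by (simp only: exp_le_cancel_iff)
    moreover have Y: "exp (-2 * lam n * x - 2 * ln (beta n)) = exp (-2 * lam n * x) / (beta n)\<^sup>2"
      proof -
      have "2 * ln (beta n) = ln ((beta n)^2)" using bpos[of n] by (simp add: ln_realpow)
      then have "exp (2 * ln (beta n)) = (beta n)^2" using bpos[of n] by simp
      then show ?thesis by (simp add: exp_diff)
    qed
    moreover have Z: "exp (-2 * ln (real (Suc n))) = inverse (real (Suc n) ^ 2)"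
      proof -
      have "2 * ln (real (Suc n)) = ln ((real (Suc n))^2)" by (simp add: ln_realpow)
      then have "exp (2 * ln (real (Suc n))) = (real (Suc n))^2" by simp
      then show ?thesis by (simp add: exp_minus)
    qed
    ultimately have "exp (-2 * lam n * x) / (beta n)\<^sup>2 \<le> inverse (real (Suc n) ^ 2)"
      by (metis Y Z X)
    then show ?case by simp
  qed
  moreover have "summable (\<lambda>n. inverse (real (Suc n) ^ 2))"
    using inverse_power_summable[of 2, where 'a=real] summable_Suc_iff[of "\<lambda>n. inverse (real n ^ 2)"]
    by simp
  ultimately show ?thesis by (rule summable_comparison_test_ev)
qed

lemma amgm:
  fixes a b t :: real assumes t: "t > 0"
  shows "a * b \<le> (t * a\<^sup>2 + b\<^sup>2 / t) / 2"
proof -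
  have "0 \<le> (t * a - b)\<^sup>2" by simp
  then have "2 * (a * b) * t \<le> t * (t * a\<^sup>2) + b\<^sup>2" by (simp add: power2_eq_square algebra_simps)
  then have "2 * (a * b) \<le> (t * (t * a\<^sup>2) + b\<^sup>2) / t" using t by (simp add: le_divide_eq)
  also have "\<dots> = t * a\<^sup>2 + b\<^sup>2 / t" using t by (simp add: field_simps)
  finally show ?thesis by simp
qed

lemma term_bound:
  fixes t :: real assumes t: "t > 0" and b: "bb > 0"
  shows "cmod a * exp (- l * x) \<le> (t * ((cmod a)\<^sup>2 * bb\<^sup>2) + exp (-2 * l * x) / bb\<^sup>2 / t) / 2"
proof -
  have e: "(exp (- l * x))\<^sup>2 = exp (-2 * l * x)"
    by (simp add: power2_eq_square exp_add[symmetric])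
  have "cmod a * exp (- l * x) = (cmod a * bb) * (exp (- l * x) / bb)" using b by simp
  also have "\<dots> \<le> (t * (cmod a * bb)\<^sup>2 + (exp (- l * x) / bb)\<^sup>2 / t) / 2" by (rule amgm[OF t])
  also have "(t * (cmod a * bb)\<^sup>2 + (exp (- l * x) / bb)\<^sup>2 / t) / 2 = (t * ((cmod a)\<^sup>2 * bb\<^sup>2) + exp (-2 * l * x) / bb\<^sup>2 / t) / 2"
    by (simp only: power_mult_distrib power_divide e)
  finally show ?thesis .
qed

lemma coeff_abs_summable:
  assumes F: "frequency_seq lam" and E: "condition_E lam beta"
    and sa: "summable (\<lambda>n. (cmod (a n))\<^sup>2 * (beta n)\<^sup>2)"
  shows "summable (\<lambda>n. cmod (a n) * exp (- lam n * x))"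
proof (rule summable_comparison_test[where g = "\<lambda>n. (1 * ((cmod (a n))\<^sup>2 * (beta n)\<^sup>2) + exp (-2 * lam n * x) / (beta n)\<^sup>2 / 1) / 2"])
  have bpos: "\<And>n. beta n > 0" using E by (auto simp: condition_E_def)
  show "\<exists>N. \<forall>n\<ge>N. norm (cmod (a n) * exp (- lam n * x)) \<le> (1 * ((cmod (a n))\<^sup>2 * (beta n)\<^sup>2) + exp (-2 * lam n * x) / (beta n)\<^sup>2 / 1) / 2"
  proof (intro exI[of _ 0] allI impI)
    fix n :: nat
    have "cmod (a n) * exp (- lam n * x) \<le> (1 * ((cmod (a n))\<^sup>2 * (beta n)\<^sup>2) + exp (-2 * lam n * x) / (beta n)\<^sup>2 / 1) / 2"
      by (rule term_bound[OF zero_less_one bpos])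
    then show "norm (cmod (a n) * exp (- lam n * x)) \<le> (1 * ((cmod (a n))\<^sup>2 * (beta n)\<^sup>2) + exp (-2 * lam n * x) / (beta n)\<^sup>2 / 1) / 2"
      by (simp add: abs_mult)
  qed
  show "summable (\<lambda>n. (1 * ((cmod (a n))\<^sup>2 * (beta n)\<^sup>2) + exp (-2 * lam n * x) / (beta n)\<^sup>2 / 1) / 2)"
    using sa K2_summable[OF F E, of x] by (intro summable_divide summable_add) auto
qed

lemma point_eval:
  assumes F: "frequency_seq lam" and E: "condition_E lam beta"
    and H: "HE_coeffs lam beta g a" and t: "t > 0"
  shows "cmod (g z) \<le> (t * (\<Sum>n. (cmod (a n))\<^sup>2 * (beta n)\<^sup>2) + K2 lam beta (Re z) / t) / 2"
proof -
  have bpos: "\<And>n. beta n > 0" using E by (auto simp: condition_E_def)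
  have sa: "summable (\<lambda>n. (cmod (a n))\<^sup>2 * (beta n)\<^sup>2)" and s: "(\<lambda>n. a n * exp (- complex_of_real (lam n) * z)) sums g z"
    using H by (auto simp: HE_coeffs_def dirichlet_rep_def)
  define h where "h n = (t * ((cmod (a n))\<^sup>2 * (beta n)\<^sup>2) + exp (-2 * lam n * Re z) / (beta n)\<^sup>2 / t) / 2" for n
  have nrm: "norm (a n * exp (- complex_of_real (lam n) * z)) = cmod (a n) * exp (- lam n * Re z)" for n
    by (simp add: norm_mult)
  have hb: "norm (a n * exp (- complex_of_real (lam n) * z)) \<le> h n" for n
    unfolding nrm h_def by (rule term_bound[OF t bpos])
  have sh: "summable h"
    unfolding h_def using sa K2_summable[OF F E, of "Re z"]
    by (intro summable_divide summable_add summable_mult) auto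
  have sn: "summable (\<lambda>n. norm (a n * exp (- complex_of_real (lam n) * z)))"
    by (rule summable_comparison_test[OF _ sh]) (use hb in auto)
  have "cmod (g z) = norm (\<Sum>n. a n * exp (- complex_of_real (lam n) * z))"
    using s by (simp add: sums_iff)
  also have "\<dots> \<le> (\<Sum>n. norm (a n * exp (- complex_of_real (lam n) * z)))" by (rule summable_norm[OF sn])
  also have "\<dots> \<le> suminf h" by (rule suminf_le[OF hb sn sh])
  also have "suminf h = (t * (\<Sum>n. (cmod (a n))\<^sup>2 * (beta n)\<^sup>2) + K2 lam beta (Re z) / t) / 2"
  proof -
    have "h sums ((t * (\<Sum>n. (cmod (a n))\<^sup>2 * (beta n)\<^sup>2) + K2 lam beta (Re z) / t) / 2)"
      unfolding h_def K2_def
      by (intro sums_divide sums_add sums_mult summable_sums sa K2_summable[OF F E])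
    then show ?thesis by (simp add: sums_iff)
  qed
  finally show ?thesis .
qed

lemma lim0:
  fixes a :: real
  assumes g1: "g1 > 0" and g2: "g2 > 0" and b: "\<And>x. x \<ge> 0 \<Longrightarrow> a \<le> B1 * exp (- g1 * x) + B2 * exp (- g2 * x)"
  shows "a \<le> 0"
proof -
  have "((\<lambda>x. B1 * exp (- g1 * x) + B2 * exp (- g2 * x)) \<longlongrightarrow> 0) at_top"
  proof -
    have l: "((\<lambda>x. exp (- g * x)) \<longlongrightarrow> 0) at_top" if g: "g > 0" for g :: real
    proof -
      have "filterlim (\<lambda>x. g * x) at_top at_top"
        by (rule filterlim_tendsto_pos_mult_at_top[OF tendsto_const g filterlim_ident])
      then have "filterlim (\<lambda>x. - (g * x)) at_bot at_top"
        by (simp add: filterlim_uminus_at_bot)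
      from filterlim_compose[OF exp_at_bot this] show ?thesis by simp
    qed
    show ?thesis using tendsto_add[OF tendsto_mult[OF tendsto_const l[OF g1]] tendsto_mult[OF tendsto_const l[OF g2]]]
      by simp
  qed
  moreover have "eventually (\<lambda>x. a \<le> B1 * exp (- g1 * x) + B2 * exp (- g2 * x)) at_top"
    using eventually_ge_at_top[of "0::real"] by (rule eventually_mono) (rule b)
  ultimately show ?thesis by (rule tendsto_lowerbound) simp
qed

lemma lead:
  fixes c :: "nat \<Rightarrow> complex"
  assumes sm: "strict_mono lam" and sc: "summable (\<lambda>m. cmod (c m))"
    and z: "\<forall>m<n. c m = 0"
    and s: "(\<lambda>m. c m * complex_of_real (exp (- lam m * x))) sums G" and x: "x \<ge> 0"
  shows "cmod (G * complex_of_real (exp (lam n * x)) - c n) \<le> exp (-(lam (Suc n) - lam n) * x) * (\<Sum>m. cmod (c m))"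
proof -
  define \<gamma> where "\<gamma> = lam (Suc n) - lam n"
  define e where "e m = complex_of_real (exp (-(lam m - lam n) * x))" for m
  have s1: "(\<lambda>m. c m * e m) sums (G * complex_of_real (exp (lam n * x)))"
  proof -
    have "(\<lambda>m. c m * complex_of_real (exp (- lam m * x)) * complex_of_real (exp (lam n * x))) sums (G * complex_of_real (exp (lam n * x)))"
      by (rule sums_mult2[OF s])
    moreover have eq: "c m * complex_of_real (exp (- lam m * x)) * complex_of_real (exp (lam n * x)) = c m * e m" for m
    proof -
      have "complex_of_real (exp (- lam m * x)) * complex_of_real (exp (lam n * x)) = complex_of_real (exp (- lam m * x + lam n * x))"
        by (simp only: exp_add of_real_mult)
      also have "- lam m * x + lam n * x = -(lam m - lam n) * x" by (simp add: algebra_simps)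
      finally show ?thesis unfolding e_def by (simp add: mult.assoc)
    qed
    moreover have "(\<lambda>m. c m * complex_of_real (exp (- lam m * x)) * complex_of_real (exp (lam n * x))) = (\<lambda>m. c m * e m)"
      by (intro ext) (rule eq)
    ultimately show ?thesis by (simp only:)
  qed
  have s2: "(\<lambda>m. if m = n then c m * e m else 0) sums (c n * e n)" by (rule sums_single)
  have en: "e n = 1" by (simp add: e_def)
  define f where "f m = c m * e m - (if m = n then c m * e m else 0)" for m
  have sf: "f sums (G * complex_of_real (exp (lam n * x)) - c n)"
    unfolding f_def using sums_diff[OF s1 s2] en by simp
  have fb: "norm (f m) \<le> exp (- \<gamma> * x) * cmod (c m)" for m
  proof (cases "m < n")
    case True then show ?thesis using z by (simp add: f_def)
  next
    case False
    show ?thesis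
    proof (cases "m = n")
      case True then show ?thesis by (simp add: f_def)
    next
      case False
      with \<open>\<not> m < n\<close> have "Suc n \<le> m" by simp
      then have "lam (Suc n) \<le> lam m" using sm by (simp add: strict_mono_less_eq)
      then have "\<gamma> \<le> lam m - lam n" by (simp add: \<gamma>_def)
      then have "- (lam m - lam n) * x \<le> - \<gamma> * x" using x by (intro mult_right_mono) auto
      then have "exp (- (lam m - lam n) * x) \<le> exp (- \<gamma> * x)" by simp
      then have i: "cmod (c m) * exp (- (lam m - lam n) * x) \<le> cmod (c m) * exp (- \<gamma> * x)"
        by (rule mult_left_mono) simp
      have nf: "norm (f m) = cmod (c m) * exp (- (lam m - lam n) * x)"
        using False by (simp add: f_def e_def norm_mult)
      show ?thesis using i nf by (metis mult.commute)
    qed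
  qed
  have sb: "summable (\<lambda>m. exp (- \<gamma> * x) * cmod (c m))" by (rule summable_mult[OF sc])
  have sn: "summable (\<lambda>m. norm (f m))" by (rule summable_comparison_test[OF _ sb]) (use fb in auto)
  have "cmod (G * complex_of_real (exp (lam n * x)) - c n) = norm (suminf f)" using sf by (simp add: sums_iff)
  also have "\<dots> \<le> (\<Sum>m. norm (f m))" by (rule summable_norm[OF sn])
  also have "\<dots> \<le> (\<Sum>m. exp (- \<gamma> * x) * cmod (c m))" by (rule suminf_le[OF fb sn sb])
  also have "\<dots> = exp (- \<gamma> * x) * (\<Sum>m. cmod (c m))" by (rule suminf_mult[OF sc])
  finally show ?thesis by (simp add: \<gamma>_def)
qed

lemma K2_ge_term:
  assumes F: "frequency_seq lam" and E: "condition_E lam beta"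
  shows "exp (-2 * lam n * x) / (beta n)\<^sup>2 \<le> K2 lam beta x"
proof -
  have "(\<Sum>m\<in>{n}. exp (-2 * lam m * x) / (beta m)\<^sup>2) \<le> K2 lam beta x"
    unfolding K2_def by (rule sum_le_suminf[OF K2_summable[OF F E]]) auto
  then show ?thesis by simp
qed

lemma K2_pos:
  assumes F: "frequency_seq lam" and E: "condition_E lam beta"
  shows "K2 lam beta x > 0"
proof -
  have "beta 0 > 0" using E by (auto simp: condition_E_def)
  then have "exp (-2 * lam 0 * x) / (beta 0)\<^sup>2 > 0" by simp
  then show ?thesis using K2_ge_term[OF F E, of 0 x] by linarith
qed

lemma K2_mono:
  assumes F: "frequency_seq lam" and E: "condition_E lam beta" and xy: "x \<le> y"
  shows "K2 lam beta y \<le> K2 lam beta x"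
proof -
  have l: "lam n \<ge> 0" for n
  proof -
    have "strict_mono lam" "lam 0 \<ge> 0" using F by (auto simp: frequency_seq_def)
    then show ?thesis by (metis le0 order_trans strict_mono_less_eq)
  qed
  have "exp (-2 * lam n * y) / (beta n)\<^sup>2 \<le> exp (-2 * lam n * x) / (beta n)\<^sup>2" for n
  proof -
    have "-2 * lam n * y \<le> -2 * lam n * x" using l[of n] xy by (simp add: mult_left_mono)
    then show ?thesis by (intro divide_right_mono) auto
  qed
  then show ?thesis unfolding K2_def by (intro suminf_le K2_summable[OF F E])
qed

lemma real_exp_conv: "exp (- complex_of_real l * complex_of_real x) = complex_of_real (exp (- l * x))"
  by (simp flip: exp_of_real)

lemma HE_unique:
  assumes F: "frequency_seq lam" and E: "condition_E lam beta"
    and Ha: "HE_coeffs lam beta f a" and Hb: "HE_coeffs lam beta f b"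
  shows "a = b"
proof -
  have sm: "strict_mono lam" using F by (auto simp: frequency_seq_def)
  define d where "d n = a n - b n" for n
  have sa: "summable (\<lambda>n. (cmod (a n))\<^sup>2 * (beta n)\<^sup>2)" and sb: "summable (\<lambda>n. (cmod (b n))\<^sup>2 * (beta n)\<^sup>2)"
    using Ha Hb by (auto simp: HE_coeffs_def)
  have sd: "summable (\<lambda>n. (cmod (d n))\<^sup>2 * (beta n)\<^sup>2)"
  proof (rule summable_comparison_test[where g = "\<lambda>n. 2 * ((cmod (a n))\<^sup>2 * (beta n)\<^sup>2) + 2 * ((cmod (b n))\<^sup>2 * (beta n)\<^sup>2)"])
    show "summable (\<lambda>n. 2 * ((cmod (a n))\<^sup>2 * (beta n)\<^sup>2) + 2 * ((cmod (b n))\<^sup>2 * (beta n)\<^sup>2))"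
      using sa sb by (intro summable_add summable_mult)
    show "\<exists>N. \<forall>n\<ge>N. norm ((cmod (d n))\<^sup>2 * (beta n)\<^sup>2) \<le> 2 * ((cmod (a n))\<^sup>2 * (beta n)\<^sup>2) + 2 * ((cmod (b n))\<^sup>2 * (beta n)\<^sup>2)"
    proof (intro exI[of _ 0] allI impI)
      fix n :: nat
      have t: "cmod (d n) \<le> cmod (a n) + cmod (b n)" unfolding d_def by (rule norm_triangle_ineq4)
      have "(cmod (d n))\<^sup>2 \<le> (cmod (a n) + cmod (b n))\<^sup>2" by (rule power_mono[OF t]) simp
      also have "\<dots> \<le> 2 * (cmod (a n))\<^sup>2 + 2 * (cmod (b n))\<^sup>2"
        using sum_squares_ge_zero[of "cmod (a n) - cmod (b n)" 0] by (simp add: power2_eq_square algebra_simps)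
      finally have "(cmod (d n))\<^sup>2 * (beta n)\<^sup>2 \<le> (2 * (cmod (a n))\<^sup>2 + 2 * (cmod (b n))\<^sup>2) * (beta n)\<^sup>2"
        by (rule mult_right_mono) simp
      then show "norm ((cmod (d n))\<^sup>2 * (beta n)\<^sup>2) \<le> 2 * ((cmod (a n))\<^sup>2 * (beta n)\<^sup>2) + 2 * ((cmod (b n))\<^sup>2 * (beta n)\<^sup>2)"
        by (simp add: algebra_simps)
    qed
  qed
  have s0: "(\<lambda>m. d m * complex_of_real (exp (- lam m * x))) sums 0" for x
  proof -
    have "(\<lambda>m. a m * exp (- complex_of_real (lam m) * complex_of_real x)) sums f (complex_of_real x)"
      "(\<lambda>m. b m * exp (- complex_of_real (lam m) * complex_of_real x)) sums f (complex_of_real x)"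
      using Ha Hb by (auto simp: HE_coeffs_def dirichlet_rep_def)
    from sums_diff[OF this] show ?thesis by (simp only: real_exp_conv d_def left_diff_distrib diff_self)
  qed
  have sc: "summable (\<lambda>m. cmod (d m))"
    using coeff_abs_summable[OF F E sd, of 0] by simp
  have "d n = 0" for n
  proof (induction n rule: less_induct)
    case (less n)
    define \<gamma> where "\<gamma> = lam (Suc n) - lam n"
    have g: "\<gamma> > 0" using sm by (simp add: \<gamma>_def strict_mono_less)
    have "cmod (d n) \<le> 0"
    proof (rule lim0[OF g g])
      fix x :: real assume x: "x \<ge> 0"
      have "cmod (0 * complex_of_real (exp (lam n * x)) - d n) \<le> exp (-(lam (Suc n) - lam n) * x) * (\<Sum>m. cmod (d m))"
        by (rule lead[OF sm sc _ s0 x]) (use less in auto)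
      then show "cmod (d n) \<le> 0 * exp (- \<gamma> * x) + (\<Sum>m. cmod (d m)) * exp (- \<gamma> * x)"
        by (simp add: \<gamma>_def mult.commute)
    qed
    then show ?case by simp
  qed
  then show ?thesis by (auto simp: d_def fun_eq_iff)
qed

definition kc :: "(nat \<Rightarrow> real) \<Rightarrow> (nat \<Rightarrow> real) \<Rightarrow> complex \<Rightarrow> nat \<Rightarrow> complex" where
  "kc lam beta \<zeta> n = exp (- complex_of_real (lam n) * cnj \<zeta>) / complex_of_real ((beta n)\<^sup>2)"

definition kf :: "(nat \<Rightarrow> real) \<Rightarrow> (nat \<Rightarrow> real) \<Rightarrow> complex \<Rightarrow> complex \<Rightarrow> complex" where
  "kf lam beta \<zeta> z = (\<Sum>n. kc lam beta \<zeta> n * exp (- complex_of_real (lam n) * z))"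

lemma aux_sq: fixes x y :: real assumes "y > 0" shows "(x / y\<^sup>2)\<^sup>2 * y\<^sup>2 = x\<^sup>2 / y\<^sup>2"
  using assms by (simp add: power_divide field_simps power2_eq_square)

lemma kc_sq:
  assumes E: "condition_E lam beta"
  shows "(cmod (kc lam beta \<zeta> n))\<^sup>2 * (beta n)\<^sup>2 = exp (-2 * lam n * Re \<zeta>) / (beta n)\<^sup>2"
proof -
  have b: "beta n > 0" using E by (auto simp: condition_E_def)
  have "cmod (kc lam beta \<zeta> n) = exp (- lam n * Re \<zeta>) / (beta n)\<^sup>2"
    unfolding kc_def using b by (simp add: norm_divide norm_exp_eq_Re norm_power)
  moreover have "(exp (- lam n * Re \<zeta>))\<^sup>2 = exp (-2 * lam n * Re \<zeta>)"
    by (simp add: power2_eq_square exp_add[symmetric])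
  ultimately show ?thesis using aux_sq[OF b, of "exp (- lam n * Re \<zeta>)"] by simp
qed

lemma kf_coeffs:
  assumes F: "frequency_seq lam" and E: "condition_E lam beta"
  shows "HE_coeffs lam beta (kf lam beta \<zeta>) (kc lam beta \<zeta>)"
    and "(\<Sum>n. (cmod (kc lam beta \<zeta> n))\<^sup>2 * (beta n)\<^sup>2) = K2 lam beta (Re \<zeta>)"
proof -
  have s1: "summable (\<lambda>n. (cmod (kc lam beta \<zeta> n))\<^sup>2 * (beta n)\<^sup>2)"
    unfolding kc_sq[OF E] by (rule K2_summable[OF F E])
  show "(\<Sum>n. (cmod (kc lam beta \<zeta> n))\<^sup>2 * (beta n)\<^sup>2) = K2 lam beta (Re \<zeta>)"
    unfolding kc_sq[OF E] K2_def ..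
  have "(\<lambda>n. kc lam beta \<zeta> n * exp (- complex_of_real (lam n) * z)) sums kf lam beta \<zeta> z" for z
  proof -
    have "summable (\<lambda>n. norm (kc lam beta \<zeta> n * exp (- complex_of_real (lam n) * z)))"
      using coeff_abs_summable[OF F E s1, of "Re z"] by (simp add: norm_mult norm_exp_eq_Re)
    then have "summable (\<lambda>n. kc lam beta \<zeta> n * exp (- complex_of_real (lam n) * z))"
      by (rule summable_norm_cancel)
    then show ?thesis unfolding kf_def by (rule summable_sums)
  qed
  then show "HE_coeffs lam beta (kf lam beta \<zeta>) (kc lam beta \<zeta>)"
    using s1 by (simp add: HE_coeffs_def dirichlet_rep_def)
qed

lemma kf_diag:
  assumes F: "frequency_seq lam" and E: "condition_E lam beta"
  shows "kf lam beta \<zeta> \<zeta> = complex_of_real (K2 lam beta (Re \<zeta>))"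
proof -
  have "kc lam beta \<zeta> n * exp (- complex_of_real (lam n) * \<zeta>) = complex_of_real (exp (-2 * lam n * Re \<zeta>) / (beta n)\<^sup>2)" for n
  proof -
    have "exp (- complex_of_real (lam n) * cnj \<zeta>) * exp (- complex_of_real (lam n) * \<zeta>)
        = exp (- complex_of_real (lam n) * (cnj \<zeta> + \<zeta>))" by (simp add: exp_add[symmetric] algebra_simps)
    also have "cnj \<zeta> + \<zeta> = complex_of_real (2 * Re \<zeta>)" by (simp add: complex_eq_iff)
    also have "- complex_of_real (lam n) * complex_of_real (2 * Re \<zeta>) = complex_of_real (-2 * lam n * Re \<zeta>)"
      by simp
    also have "exp (complex_of_real (-2 * lam n * Re \<zeta>)) = complex_of_real (exp (-2 * lam n * Re \<zeta>))"
      by (rule exp_of_real)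
    finally show ?thesis unfolding kc_def by simp
  qed
  then have "(\<lambda>n. kc lam beta \<zeta> n * exp (- complex_of_real (lam n) * \<zeta>)) sums complex_of_real (K2 lam beta (Re \<zeta>))"
    unfolding K2_def using sums_of_real[where 'a=complex, OF summable_sums[OF K2_summable[OF F E]]] by simp
  then show ?thesis unfolding kf_def by (simp add: sums_iff)
qed

lemma kf_norm:
  assumes F: "frequency_seq lam" and E: "condition_E lam beta"
  shows "in_HE lam beta (kf lam beta \<zeta>)" and "HE_norm lam beta (kf lam beta \<zeta>) = sqrt (K2 lam beta (Re \<zeta>))"
proof -
  show "in_HE lam beta (kf lam beta \<zeta>)" using kf_coeffs[OF F E] by (auto simp: in_HE_def)
  then have "HE_coeffs lam beta (kf lam beta \<zeta>) (SOME a. HE_coeffs lam beta (kf lam beta \<zeta>) a)"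
    unfolding in_HE_def by (rule someI_ex)
  then have "(SOME a. HE_coeffs lam beta (kf lam beta \<zeta>) a) = kc lam beta \<zeta>"
    by (rule HE_unique[OF F E _ kf_coeffs(1)[OF F E]])
  then show "HE_norm lam beta (kf lam beta \<zeta>) = sqrt (K2 lam beta (Re \<zeta>))"
    unfolding HE_norm_def using kf_coeffs(2)[OF F E] by simp
qed

lemma kernel_ineq:
  assumes F: "frequency_seq lam" and E: "condition_E lam beta" and B: "bounded_composition lam beta \<phi>"
  obtains C where "C > 0" "\<And>w. K2 lam beta (Re (\<phi> w)) \<le> C\<^sup>2 * K2 lam beta (Re w)"
proof -
  obtain C0 where C0: "\<And>f. in_HE lam beta f \<Longrightarrow> HE_norm lam beta (f \<circ> \<phi>) \<le> C0 * HE_norm lam beta f"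
    using B unfolding bounded_composition_def by blast
  have into: "\<And>f. in_HE lam beta f \<Longrightarrow> in_HE lam beta (f \<circ> \<phi>)" using B unfolding bounded_composition_def by blast
  define C where "C = max C0 1"
  have Cp: "C > 0" by (simp add: C_def)
  have "K2 lam beta (Re (\<phi> w)) \<le> C\<^sup>2 * K2 lam beta (Re w)" for w
  proof -
    define \<zeta> where "\<zeta> = \<phi> w"
    define g where "g = kf lam beta \<zeta> \<circ> \<phi>"
    have ig: "in_HE lam beta g" unfolding g_def by (rule into[OF kf_norm(1)[OF F E]])
    define a where "a = (SOME a. HE_coeffs lam beta g a)"
    have Ha: "HE_coeffs lam beta g a" using ig unfolding in_HE_def a_def by (rule someI_ex)
    define A where "A = (\<Sum>n. (cmod (a n))\<^sup>2 * (beta n)\<^sup>2)"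
    have A0: "A \<ge> 0" unfolding A_def using Ha by (intro suminf_nonneg) (auto simp: HE_coeffs_def)
    have N: "HE_norm lam beta g = sqrt A" unfolding HE_norm_def A_def a_def ..
    have "sqrt A \<le> C0 * sqrt (K2 lam beta (Re \<zeta>))"
      using C0[OF kf_norm(1)[OF F E, of \<zeta>]] N kf_norm(2)[OF F E, of \<zeta>] unfolding g_def by simp
    also have "\<dots> \<le> C * sqrt (K2 lam beta (Re \<zeta>))"
      by (rule mult_right_mono) (use less_imp_le[OF K2_pos[OF F E, of "Re \<zeta>"]] in \<open>auto simp: C_def\<close>)
    finally have "(sqrt A)\<^sup>2 \<le> (C * sqrt (K2 lam beta (Re \<zeta>)))\<^sup>2"
      by (rule power_mono) (simp add: A0)
    then have AK: "A \<le> C\<^sup>2 * K2 lam beta (Re \<zeta>)"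
      using A0 K2_pos[OF F E, of "Re \<zeta>"] by (simp add: power_mult_distrib)
    have t: "1 / C\<^sup>2 > 0" using Cp by simp
    have "cmod (g w) \<le> (1 / C\<^sup>2 * A + K2 lam beta (Re w) / (1 / C\<^sup>2)) / 2"
      using point_eval[OF F E Ha t] unfolding A_def .
    also have "1 / C\<^sup>2 * A \<le> K2 lam beta (Re \<zeta>)" using AK Cp by (simp add: field_simps)
    finally have "cmod (g w) \<le> (K2 lam beta (Re \<zeta>) + C\<^sup>2 * K2 lam beta (Re w)) / 2" by (simp add: mult.commute)
    moreover have "cmod (g w) = K2 lam beta (Re \<zeta>)"
      unfolding g_def using kf_diag[OF F E, of \<zeta>] less_imp_le[OF K2_pos[OF F E, of "Re \<zeta>"]] by (simp add: \<zeta>_def)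
    ultimately show ?thesis by (simp add: \<zeta>_def)
  qed
  then show ?thesis using that Cp by blast
qed

lemma lam_facts:
  assumes F: "frequency_seq lam"
  shows "strict_mono lam" "lam 0 \<ge> 0" "\<And>n. lam n \<ge> 0" "filterlim lam at_top sequentially"
proof -
  show sm: "strict_mono lam" and l0: "lam 0 \<ge> 0" and "filterlim lam at_top sequentially"
    using F by (auto simp: frequency_seq_def)
  show "lam n \<ge> 0" for n using sm l0 by (metis le0 order_trans strict_mono_less_eq)
qed

lemma K2_big:
  assumes F: "frequency_seq lam" and E: "condition_E lam beta"
  shows "\<exists>m\<ge>0. \<forall>x. x \<le> -m \<longrightarrow> K2 lam beta x > B"
proof -
  have sm: "strict_mono lam" and l0: "lam 0 \<ge> 0" using lam_facts[OF F] by auto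
  have l1: "lam 1 > 0" using sm l0 by (metis strict_mono_less zero_less_one le_less_trans)
  have b1: "beta 1 > 0" using E by (auto simp: condition_E_def)
  define m where "m = max 0 (ln (\<bar>B\<bar> * (beta 1)\<^sup>2 + 1) / (2 * lam 1))"
  have "K2 lam beta x > B" if x: "x \<le> -m" for x
  proof -
    have "ln (\<bar>B\<bar> * (beta 1)\<^sup>2 + 1) / (2 * lam 1) \<le> -x" using x unfolding m_def by linarith
    then have "ln (\<bar>B\<bar> * (beta 1)\<^sup>2 + 1) \<le> -2 * lam 1 * x" using l1 by (simp add: divide_le_eq algebra_simps)
    then have "exp (ln (\<bar>B\<bar> * (beta 1)\<^sup>2 + 1)) \<le> exp (-2 * lam 1 * x)" by (simp only: exp_le_cancel_iff)
    then have "\<bar>B\<bar> * (beta 1)\<^sup>2 + 1 \<le> exp (-2 * lam 1 * x)" by (simp add: add_nonneg_pos)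
    then have "B * (beta 1)\<^sup>2 < exp (-2 * lam 1 * x)"
    proof -
      have "B * (beta 1)\<^sup>2 \<le> \<bar>B\<bar> * (beta 1)\<^sup>2" by (intro mult_right_mono) auto
      then show ?thesis using \<open>\<bar>B\<bar> * (beta 1)\<^sup>2 + 1 \<le> exp (-2 * lam 1 * x)\<close> by linarith
    qed
    then have "B < exp (-2 * lam 1 * x) / (beta 1)\<^sup>2" using b1 by (simp add: less_divide_eq)
    then show ?thesis using K2_ge_term[OF F E, of 1 x] by linarith
  qed
  then show ?thesis by (intro exI[of _ m]) (auto simp: m_def)
qed

lemma K2_shift:
  assumes F: "frequency_seq lam" and E: "condition_E lam beta" and C: "C > 0" and d: "\<delta> > 0"
  shows "\<exists>T\<ge>0. \<forall>x. x \<le> -T \<longrightarrow> C\<^sup>2 * K2 lam beta x < K2 lam beta (x - \<delta>)"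
proof -
  have sm: "strict_mono lam" and lpos: "\<And>n. lam n \<ge> 0" and lim: "filterlim lam at_top sequentially"
    using lam_facts[OF F] by auto
  have bpos: "\<And>n. beta n > 0" using E by (auto simp: condition_E_def)
  define t where "t x n = exp (-2 * lam n * x) / (beta n)\<^sup>2" for x n
  have tpos: "t x n > 0" for x n using bpos[of n] by (simp add: t_def)
  have st: "summable (t x)" for x unfolding t_def by (rule K2_summable[OF F E])
  have K2t: "K2 lam beta x = suminf (t x)" for x unfolding K2_def t_def ..
  obtain N0 where N0: "\<And>n. n \<ge> N0 \<Longrightarrow> lam n \<ge> ln (4 * C\<^sup>2) / (2 * \<delta>)"
    using lim unfolding filterlim_at_top eventually_sequentially by blast
  define N where "N = max N0 1"
  have N1: "N \<ge> 1" by (simp add: N_def)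
  have bigN: "exp (2 * lam n * \<delta>) \<ge> 4 * C\<^sup>2" if "n \<ge> N" for n
  proof -
    have "ln (4 * C\<^sup>2) / (2 * \<delta>) \<le> lam n" using N0 that by (simp add: N_def)
    then have "ln (4 * C\<^sup>2) \<le> 2 * lam n * \<delta>" using d by (simp add: divide_le_eq algebra_simps)
    then have "exp (ln (4 * C\<^sup>2)) \<le> exp (2 * lam n * \<delta>)" by (simp only: exp_le_cancel_iff)
    then show ?thesis using C by simp
  qed
  define \<gamma> where "\<gamma> = lam N - lam (N - 1)"
  have g: "\<gamma> > 0" unfolding \<gamma>_def using sm N1 by (simp add: strict_mono_less)
  define S where "S = (\<Sum>n<N. 1 / (beta n)\<^sup>2)"
  define R where "R = real N * (beta N)\<^sup>2 * S + 1"
  have S0: "S \<ge> 0" unfolding S_def by (intro sum_nonneg) simp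
  have R1: "R \<ge> 1" unfolding R_def using S0 by simp
  define T where "T = ln R / (2 * \<gamma>)"
  have T0: "T \<ge> 0" unfolding T_def using R1 g by simp
  have main: "C\<^sup>2 * K2 lam beta x < K2 lam beta (x - \<delta>)" if x: "x \<le> -T" for x
  proof -
    have small: "t x n \<le> t x N / real N" if n: "n < N" for n
    proof -
      have "\<gamma> \<le> lam N - lam n" unfolding \<gamma>_def using n sm by (simp add: strict_mono_less_eq)
      moreover have "T \<le> -x" using x by simp
      ultimately have "\<gamma> * T \<le> (lam N - lam n) * (-x)" using g T0 by (intro mult_mono) auto
      then have "ln R \<le> 2 * (lam N - lam n) * (-x)" using g by (simp add: T_def field_simps)
      then have "exp (ln R) \<le> exp (2 * (lam N - lam n) * (-x))" by (simp only: exp_le_cancel_iff)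
      then have e1: "R \<le> exp (2 * (lam N - lam n) * (-x))" using R1 by simp
      have "1 / (beta n)\<^sup>2 \<le> S" unfolding S_def using n
        by (intro member_le_sum) auto
      then have "real N * (beta N)\<^sup>2 * (1 / (beta n)\<^sup>2) \<le> real N * (beta N)\<^sup>2 * S"
        by (intro mult_left_mono) auto
      then have "real N * (beta N)\<^sup>2 / (beta n)\<^sup>2 \<le> exp (2 * (lam N - lam n) * (-x))"
        using e1 unfolding R_def by simp
      moreover have "exp (2 * (lam N - lam n) * (-x)) = exp (-2 * lam N * x) / exp (-2 * lam n * x)"
        by (simp add: exp_diff[symmetric] algebra_simps)
      ultimately have "real N * (beta N)\<^sup>2 / (beta n)\<^sup>2 \<le> exp (-2 * lam N * x) / exp (-2 * lam n * x)" by simp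
      then show ?thesis using bpos[of n] bpos[of N] N1 unfolding t_def
        by (simp add: field_simps)
    qed
    define hd where "hd = (\<Sum>n<N. t x n)"
    have "hd \<le> (\<Sum>n<N. t x N / real N)" unfolding hd_def by (intro sum_mono small) auto
    also have "\<dots> = t x N" using N1 by simp
    finally have hdN: "hd \<le> t x N" .
    have "hd + t x N = (\<Sum>n\<in>{..<N} \<union> {N}. t x n)" unfolding hd_def by (subst sum.union_disjoint) auto
    also have "\<dots> \<le> K2 lam beta x" unfolding K2t by (intro sum_le_suminf st) (auto intro: less_imp_le tpos)
    finally have hdK: "2 * hd \<le> K2 lam beta x" using hdN by simp
    have tshift: "t (x - \<delta>) n = exp (2 * lam n * \<delta>) * t x n" for n
      unfolding t_def by (simp add: exp_add[symmetric] algebra_simps)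
    have ssum: "(\<lambda>n. 4 * C\<^sup>2 * (t x n - (if n \<in> {..<N} then t x n else 0))) sums (4 * C\<^sup>2 * (K2 lam beta x - hd))"
      unfolding K2t hd_def by (intro sums_mult sums_diff summable_sums st sums_If_finite_set) auto
    have "4 * C\<^sup>2 * (K2 lam beta x - hd) \<le> K2 lam beta (x - \<delta>)"
    proof -
      have "4 * C\<^sup>2 * (t x n - (if n \<in> {..<N} then t x n else 0)) \<le> t (x - \<delta>) n" for n
      proof (cases "n < N")
        case True then show ?thesis using tpos[of "x - \<delta>" n] by simp
      next
        case False
        then have "4 * C\<^sup>2 * t x n \<le> exp (2 * lam n * \<delta>) * t x n" using bigN[of n] tpos[of x n]
          by (intro mult_right_mono) auto
        then show ?thesis using False tshift by simp
      qed
      then have "4 * C\<^sup>2 * (K2 lam beta x - hd) \<le> suminf (t (x - \<delta>))"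
        by (rule sums_le[OF _ ssum summable_sums[OF st]])
      then show ?thesis by (simp only: K2t)
    qed
    moreover have "4 * C\<^sup>2 * (K2 lam beta x - hd) \<ge> 2 * C\<^sup>2 * K2 lam beta x"
    proof -
      have "4 * C\<^sup>2 * (K2 lam beta x / 2) \<le> 4 * C\<^sup>2 * (K2 lam beta x - hd)"
        using hdK by (intro mult_left_mono) auto
      then show ?thesis by simp
    qed
    moreover have "2 * C\<^sup>2 * K2 lam beta x > C\<^sup>2 * K2 lam beta x" using K2_pos[OF F E, of x] C by simp
    ultimately show ?thesis by linarith
  qed
  show ?thesis using T0 main by blast
qed

lemma re_bounds:
  assumes F: "frequency_seq lam" and E: "condition_E lam beta" and B: "bounded_composition lam beta \<phi>"
  shows "\<And>\<delta>. \<delta> > 0 \<Longrightarrow> \<exists>T\<ge>0. \<forall>w. Re w \<le> -T \<longrightarrow> Re w - \<delta> \<le> Re (\<phi> w)"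
    and "\<And>T. \<exists>m. \<forall>w. Re w \<ge> -T \<longrightarrow> -m \<le> Re (\<phi> w)"
proof -
  obtain C where C: "C > 0" and ki: "\<And>w. K2 lam beta (Re (\<phi> w)) \<le> C\<^sup>2 * K2 lam beta (Re w)"
    using kernel_ineq[OF F E B] by blast
  show "\<exists>T\<ge>0. \<forall>w. Re w \<le> -T \<longrightarrow> Re w - \<delta> \<le> Re (\<phi> w)" if d: "\<delta> > 0" for \<delta>
  proof -
    obtain T where T: "T \<ge> 0" "\<And>x. x \<le> -T \<Longrightarrow> C\<^sup>2 * K2 lam beta x < K2 lam beta (x - \<delta>)"
      using K2_shift[OF F E C d] by blast
    have "Re w - \<delta> \<le> Re (\<phi> w)" if w: "Re w \<le> -T" for w
    proof (rule ccontr)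
      assume "\<not> ?thesis"
      then have "K2 lam beta (Re w - \<delta>) \<le> K2 lam beta (Re (\<phi> w))" by (intro K2_mono[OF F E]) auto
      then show False using T(2)[OF w] ki[of w] by linarith
    qed
    then show ?thesis using T by blast
  qed
  show "\<exists>m. \<forall>w. Re w \<ge> -T \<longrightarrow> -m \<le> Re (\<phi> w)" for T
  proof -
    obtain m where m: "\<And>x. x \<le> -m \<Longrightarrow> K2 lam beta x > C\<^sup>2 * K2 lam beta (-T)"
      using K2_big[OF F E, of "C\<^sup>2 * K2 lam beta (-T)"] by blast
    have "-m \<le> Re (\<phi> w)" if w: "Re w \<ge> -T" for w
    proof (rule ccontr)
      assume "\<not> ?thesis"
      then have "K2 lam beta (Re (\<phi> w)) > C\<^sup>2 * K2 lam beta (-T)" using m by simp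
      moreover have "K2 lam beta (Re w) \<le> K2 lam beta (-T)" using w by (rule K2_mono[OF F E])
      then have "C\<^sup>2 * K2 lam beta (Re w) \<le> C\<^sup>2 * K2 lam beta (-T)" by (intro mult_left_mono) auto
      ultimately show False using ki[of w] by linarith
    qed
    then show ?thesis by blast
  qed
qed



lemma half_plane_disc:
  fixes p q :: complex assumes p: "Re p > 0" and q: "Re q > 0"
  shows "cmod (p - q) < cmod (p + cnj q)"
proof -
  have "(cmod (p - q))\<^sup>2 = (Re p - Re q)\<^sup>2 + (Im p - Im q)\<^sup>2" by (simp add: cmod_power2)
  moreover have "(cmod (p + cnj q))\<^sup>2 = (Re p + Re q)\<^sup>2 + (Im p - Im q)\<^sup>2" by (simp add: cmod_power2)
  moreover have "(Re p - Re q)\<^sup>2 < (Re p + Re q)\<^sup>2"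
    using p q by (simp add: power2_eq_square algebra_simps)
  ultimately have "(cmod (p - q))\<^sup>2 < (cmod (p + cnj q))\<^sup>2" by simp
  then show ?thesis by (rule power2_less_imp_less) simp
qed

lemma borel_car:
  fixes \<phi> :: "complex \<Rightarrow> complex"
  assumes hol: "\<phi> holomorphic_on UNIV" and lb: "\<And>w. Re (\<phi> w) \<ge> - cmod w - M"
  shows "cmod (\<phi> w - \<phi> 0) \<le> 2 * (Re (\<phi> 0) + 2 * cmod w + \<bar>M\<bar> + 1)"
proof (cases "w = 0")
  case True
  have "Re (\<phi> 0) \<ge> - M" using lb[of 0] by simp
  then show ?thesis using True by simp
next
  case False
  define R where "R = 2 * cmod w"
  have R: "R > 0" using False by (simp add: R_def)
  define s where "s = R + \<bar>M\<bar> + 1"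
  define h where "h u = \<phi> (complex_of_real R * u) + complex_of_real s" for u
  define h0 where "h0 = h 0"
  have h0: "h0 = \<phi> 0 + complex_of_real s" by (simp add: h0_def h_def)
  have reh: "Re (h u) \<ge> 1" if u: "cmod u < 1" for u
  proof -
    have "cmod (complex_of_real R * u) \<le> R" using u R by (simp add: norm_mult)
    then show ?thesis using lb[of "complex_of_real R * u"] by (simp add: h_def s_def)
  qed
  have reh0: "Re h0 > 0" using reh[of 0] by (simp add: h0_def)
  define F where "F u = (h u - h0) / (h u + cnj h0)" for u
  have den: "h u + cnj h0 \<noteq> 0" if "cmod u < 1" for u
  proof -
    have pos: "Re (h u + cnj h0) > 0" using reh[OF that] reh0 by simp
    show ?thesis
    proof
      assume "h u + cnj h0 = 0"
      then have "Re (h u + cnj h0) = 0" by simp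
      with pos show False by simp
    qed
  qed
  have holh: "h holomorphic_on ball 0 1" unfolding h_def
    by (intro holomorphic_intros holomorphic_on_compose_gen[OF _ hol, unfolded o_def]) auto
  have holF: "F holomorphic_on ball 0 1" unfolding F_def
    using den by (intro holomorphic_intros holh) auto
  have F0: "F 0 = 0" by (simp add: F_def h0_def)
  have Fl: "cmod (F u) < 1" if "cmod u < 1" for u
  proof -
    have "cmod (h u - h0) < cmod (h u + cnj h0)"
      using half_plane_disc[of "h u" h0] reh[OF that] reh0 by simp
    then show ?thesis using den[OF that] by (simp add: F_def norm_divide divide_less_eq)
  qed
  define \<xi> where "\<xi> = w / complex_of_real R"
  have n\<xi>: "cmod \<xi> = 1/2" using False by (simp add: \<xi>_def R_def norm_divide)
  have l1: "cmod \<xi> < 1" using n\<xi> by simp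
  have "cmod (F \<xi>) \<le> cmod \<xi>" using Schwarz_Lemma(1)[OF holF F0 Fl l1] by simp
  then have "cmod (F \<xi>) \<le> 1/2" by (simp add: n\<xi>)
  then have "cmod (h \<xi> - h0) \<le> 1/2 * cmod (h \<xi> + cnj h0)"
    using den[of \<xi>] n\<xi> by (simp add: F_def norm_divide divide_le_eq)
  also have "cmod (h \<xi> + cnj h0) \<le> cmod (h \<xi> - h0) + cmod (h0 + cnj h0)"
    using norm_triangle_ineq[of "h \<xi> - h0" "h0 + cnj h0"] by simp
  finally have "cmod (h \<xi> - h0) \<le> cmod (h0 + cnj h0)" by simp
  also have "h0 + cnj h0 = complex_of_real (2 * Re h0)" by (simp add: complex_eq_iff)
  also have "cmod (complex_of_real (2 * Re h0)) = 2 * Re h0" using reh0 by simp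
  also have "h \<xi> - h0 = \<phi> w - \<phi> 0"
    using R by (simp add: h_def h0 \<xi>_def)
  finally show ?thesis by (simp add: h0 s_def R_def)
qed

lemma affine_of_re_lower:
  fixes \<phi> :: "complex \<Rightarrow> complex"
  assumes hol: "\<phi> holomorphic_on UNIV" and lb: "\<And>w. Re (\<phi> w) \<ge> - cmod w - M"
  shows "\<phi> z = \<phi> 0 + deriv \<phi> 0 * z"
proof -
  define D where "D = cmod (\<phi> 0) + 2 * \<bar>Re (\<phi> 0)\<bar> + 2 * \<bar>M\<bar> + 2"
  have "cmod (\<phi> w) \<le> (4 + D) * cmod w ^ 1" if w: "1 \<le> cmod w" for w
  proof -
    have "cmod (\<phi> w) \<le> cmod (\<phi> 0) + cmod (\<phi> w - \<phi> 0)"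
      using norm_triangle_ineq[of "\<phi> 0" "\<phi> w - \<phi> 0"] by simp
    also have "\<dots> \<le> cmod (\<phi> 0) + 2 * (Re (\<phi> 0) + 2 * cmod w + \<bar>M\<bar> + 1)"
      using borel_car[OF hol lb, of w] by simp
    also have "\<dots> \<le> 4 * cmod w + D" unfolding D_def by simp
    also have "\<dots> \<le> (4 + D) * cmod w"
    proof -
      have "D \<ge> 0" unfolding D_def by simp
      then have "D * 1 \<le> D * cmod w" using w by (intro mult_left_mono) auto
      then show ?thesis by (simp add: algebra_simps)
    qed
    finally show ?thesis by simp
  qed
  from Liouville_polynomial[OF hol this, where \<xi>=z] show ?thesis by simp
qed



lemma dir_excl:
  assumes F: "frequency_seq lam" and E: "condition_E lam beta" and l0: "lam 0 = 0"
    and into: "\<And>f. in_HE lam beta f \<Longrightarrow> in_HE lam beta (f \<circ> \<phi>)"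
    and aff: "\<And>z. \<phi> z = b + complex_of_real a * z" and a0: "a > 0" and a1: "a < 1"
  shows False
proof -
  have sm: "strict_mono lam" using lam_facts[OF F] by auto
  have l1: "lam 1 > 0" using sm l0 by (metis strict_mono_less zero_less_one)
  define f1 where "f1 z = exp (- complex_of_real (lam 1) * z)" for z
  define a1 where "a1 (n::nat) = (if n = 1 then 1 else 0 :: complex)" for n
  have "HE_coeffs lam beta f1 a1"
    unfolding HE_coeffs_def dirichlet_rep_def
  proof
    have "(\<lambda>n. if n = 1 then (cmod (a1 n))\<^sup>2 * (beta n)\<^sup>2 else 0) sums ((cmod (a1 1))\<^sup>2 * (beta 1)\<^sup>2)"
      by (rule sums_single)
    moreover have "(\<lambda>n. if n = 1 then (cmod (a1 n))\<^sup>2 * (beta n)\<^sup>2 else 0) = (\<lambda>n. (cmod (a1 n))\<^sup>2 * (beta n)\<^sup>2)"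
      by (auto simp: a1_def)
    ultimately show "summable (\<lambda>n. (cmod (a1 n))\<^sup>2 * (beta n)\<^sup>2)" by (metis sums_summable)
    show "\<forall>z. (\<lambda>n. a1 n * exp (- complex_of_real (lam n) * z)) sums f1 z"
    proof
      fix z
      have "(\<lambda>n. if n = 1 then a1 n * exp (- complex_of_real (lam n) * z) else 0) sums (a1 1 * exp (- complex_of_real (lam 1) * z))"
        by (rule sums_single)
      moreover have "(\<lambda>n. if n = 1 then a1 n * exp (- complex_of_real (lam n) * z) else 0) = (\<lambda>n. a1 n * exp (- complex_of_real (lam n) * z))"
        by (auto simp: a1_def)
      ultimately show "(\<lambda>n. a1 n * exp (- complex_of_real (lam n) * z)) sums f1 z" by (simp add: a1_def f1_def)
    qed
  qed
  then have "in_HE lam beta f1" by (auto simp: in_HE_def)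
  then have "in_HE lam beta (f1 \<circ> \<phi>)" by (rule into)
  then obtain c where Hc: "HE_coeffs lam beta (f1 \<circ> \<phi>) c" by (auto simp: in_HE_def)
  have sc2: "summable (\<lambda>n. (cmod (c n))\<^sup>2 * (beta n)\<^sup>2)" using Hc by (auto simp: HE_coeffs_def)
  have sc: "summable (\<lambda>m. cmod (c m))" using coeff_abs_summable[OF F E sc2, of 0] by simp
  define S where "S = (\<Sum>m. cmod (c m))"
  define d where "d = exp (- complex_of_real (lam 1) * b)"
  define \<mu> where "\<mu> = lam 1 * a"
  have \<mu>: "0 < \<mu>" "\<mu> < lam 1" using a0 a1 l1 by (auto simp: \<mu>_def)
  have sx: "(\<lambda>m. c m * complex_of_real (exp (- lam m * x))) sums (d * complex_of_real (exp (- \<mu> * x)))" for x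
  proof -
    have "(\<lambda>m. c m * exp (- complex_of_real (lam m) * complex_of_real x)) sums (f1 \<circ> \<phi>) (complex_of_real x)"
      using Hc by (auto simp: HE_coeffs_def dirichlet_rep_def)
    moreover have "(f1 \<circ> \<phi>) (complex_of_real x) = d * complex_of_real (exp (- \<mu> * x))"
    proof -
      have "(f1 \<circ> \<phi>) (complex_of_real x) = exp (- complex_of_real (lam 1) * b + complex_of_real (- \<mu> * x))"
        by (simp add: f1_def aff \<mu>_def algebra_simps)
      also have "\<dots> = d * exp (complex_of_real (- \<mu> * x))" by (simp only: exp_add d_def)
      also have "exp (complex_of_real (- \<mu> * x)) = complex_of_real (exp (- \<mu> * x))" by (rule exp_of_real)
      finally show ?thesis .
    qed
    ultimately show ?thesis by (simp only: real_exp_conv)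
  qed
  have est: "cmod (d * complex_of_real (exp (- \<mu> * x)) - c 0) \<le> exp (- lam 1 * x) * S" if x: "x \<ge> 0" for x
    using lead[OF sm sc _ sx x, of 0] l0 by (simp add: S_def)
  have "cmod (c 0) \<le> 0"
  proof (rule lim0[OF \<mu>(1) l1])
    fix x :: real assume x: "x \<ge> 0"
    have "cmod (c 0) \<le> cmod (d * complex_of_real (exp (- \<mu> * x))) + cmod (d * complex_of_real (exp (- \<mu> * x)) - c 0)"
      using norm_triangle_ineq4[of "d * complex_of_real (exp (- \<mu> * x))" "c 0"] norm_triangle_ineq[of "d * complex_of_real (exp (- \<mu> * x))" "-(d * complex_of_real (exp (- \<mu> * x)) - c 0)"]
      by (simp add: norm_minus_commute)
    also have "\<dots> \<le> cmod d * exp (- \<mu> * x) + S * exp (- lam 1 * x)"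
      using est[OF x] by (simp add: norm_mult mult.commute)
    finally show "cmod (c 0) \<le> cmod d * exp (- \<mu> * x) + S * exp (- lam 1 * x)" .
  qed
  then have c0: "c 0 = 0" by simp
  have g: "lam 1 - \<mu> > 0" using \<mu> by simp
  have "cmod d \<le> 0"
  proof (rule lim0[OF g g])
    fix x :: real assume x: "x \<ge> 0"
    have "cmod d * exp (- \<mu> * x) \<le> S * exp (- lam 1 * x)"
      using est[OF x] c0 by (simp add: norm_mult mult.commute)
    then have X: "cmod d * exp (- \<mu> * x) * exp (\<mu> * x) \<le> S * exp (- lam 1 * x) * exp (\<mu> * x)"
      by (rule mult_right_mono) simp
    have Y: "exp (- \<mu> * x) * exp (\<mu> * x) = 1" by (simp add: exp_add[symmetric])
    have Z: "exp (- lam 1 * x) * exp (\<mu> * x) = exp (- (lam 1 - \<mu>) * x)" by (simp add: exp_add[symmetric] algebra_simps)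
    have "cmod d \<le> S * exp (- (lam 1 - \<mu>) * x)" using X unfolding mult.assoc Y Z by simp
    then show "cmod d \<le> 0 * exp (- (lam 1 - \<mu>) * x) + S * exp (- (lam 1 - \<mu>) * x)" by simp
  qed
  moreover have "d \<noteq> 0" by (simp add: d_def)
  ultimately show False by simp
qed

theorem proposition4p6:
  fixes lam beta :: "nat \<Rightarrow> real" and \<phi> :: "complex \<Rightarrow> complex"
  assumes "frequency_seq lam" and "lam 0 = 0"
    and "condition_E lam beta"
    and "\<phi> holomorphic_on UNIV"
    and "bounded_composition lam beta \<phi>"
  shows "(\<exists>c. \<forall>z. \<phi> z = c) \<noteq> (\<exists>b. Re b \<ge> 0 \<and> (\<forall>z. \<phi> z = z + b))"
proof -
  note F = assms(1) and l0 = assms(2) and E = assms(3) and hol = assms(4) and B = assms(5)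
  have into: "\<And>f. in_HE lam beta f \<Longrightarrow> in_HE lam beta (f \<circ> \<phi>)" using B unfolding bounded_composition_def by blast
  have excl: "\<not> ((\<exists>c. \<forall>z. \<phi> z = c) \<and> (\<exists>b. Re b \<ge> 0 \<and> (\<forall>z. \<phi> z = z + b)))"
  proof
    assume "(\<exists>c. \<forall>z. \<phi> z = c) \<and> (\<exists>b. Re b \<ge> 0 \<and> (\<forall>z. \<phi> z = z + b))"
    then obtain c b where "\<forall>z. \<phi> z = c" "\<forall>z. \<phi> z = z + b" by blast
    then have "0 + b = 1 + b" by metis
    then show False by simp
  qed
  obtain T1 where T1: "T1 \<ge> 0" "\<And>w. Re w \<le> -T1 \<Longrightarrow> Re w - 1 \<le> Re (\<phi> w)"
    using re_bounds(1)[OF F E B, of 1] by auto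
  obtain m where m: "\<And>w. Re w \<ge> -T1 \<Longrightarrow> -m \<le> Re (\<phi> w)"
    using re_bounds(2)[OF F E B, of T1] by auto
  obtain m0 where m0: "\<And>w. Re w \<ge> 0 \<Longrightarrow> -m0 \<le> Re (\<phi> w)"
    using re_bounds(2)[OF F E B, of 0] by auto
  have lb: "Re (\<phi> w) \<ge> - cmod w - (\<bar>m\<bar> + 1)" for w
  proof (cases "Re w \<le> -T1")
    case True
    then show ?thesis using T1(2)[OF True] abs_Re_le_cmod[of w] by linarith
  next
    case False
    then show ?thesis using m[of w] norm_ge_zero[of w] by linarith
  qed
  define b where "b = \<phi> 0"
  define \<alpha> where "\<alpha> = deriv \<phi> 0"
  have aff: "\<phi> z = b + \<alpha> * z" for z unfolding b_def \<alpha>_def by (rule affine_of_re_lower[OF hol lb])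
  show ?thesis
  proof (cases "\<alpha> = 0")
    case True
    then have "\<exists>c. \<forall>z. \<phi> z = c" using aff by auto
    then show ?thesis using excl by blast
  next
    case False
    have im: "Im \<alpha> = 0"
    proof (rule ccontr)
      assume ne: "Im \<alpha> \<noteq> 0"
      define y where "y = (Re b + m0 + 1) / Im \<alpha>"
      have "Re (\<phi> (\<i> * complex_of_real y)) = Re b - Im \<alpha> * y" by (simp add: aff)
      also have "\<dots> = - m0 - 1" using ne by (simp add: y_def)
      finally show False using m0[of "\<i> * complex_of_real y"] by simp
    qed
    have re: "Re \<alpha> > 0"
    proof (rule ccontr)
      assume "\<not> Re \<alpha> > 0"
      then have neg: "Re \<alpha> < 0" using False im by (metis complex_eq_iff linorder_neqE_linordered_idom zero_complex.simps)
      define x where "x = (\<bar>Re b\<bar> + \<bar>m0\<bar> + 1) / (- Re \<alpha>)"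
      have x0: "x \<ge> 0" using neg unfolding x_def by (intro divide_nonneg_pos) auto
      have "Re (\<phi> (complex_of_real x)) = Re b + Re \<alpha> * x" using im by (simp add: aff)
      also have "Re \<alpha> * x = - (\<bar>Re b\<bar> + \<bar>m0\<bar> + 1)" using neg by (simp add: x_def)
      finally have "Re (\<phi> (complex_of_real x)) < - m0" by linarith
      then show False using m0[of "complex_of_real x"] x0 by simp
    qed
    define a where "a = Re \<alpha>"
    have \<alpha>a: "\<alpha> = complex_of_real a" using im by (simp add: a_def complex_eq_iff)
    have a_le: "a \<le> 1"
    proof (rule ccontr)
      assume "\<not> a \<le> 1"
      then have a1: "a > 1" by simp
      define x where "x = - (T1 + (\<bar>Re b\<bar> + 2) / (a - 1))"
      have xT: "x \<le> -T1" using a1 T1(1) by (simp add: x_def)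
      have "(a - 1) * x = - (a - 1) * T1 - (\<bar>Re b\<bar> + 2)" using a1 by (simp add: x_def field_simps)
      also have "\<dots> \<le> - (\<bar>Re b\<bar> + 2)" using mult_nonpos_nonneg[of "1 - a" T1] a1 T1(1) by simp
      finally have "(a - 1) * x \<le> - (\<bar>Re b\<bar> + 2)" .
      then have "Re b + a * x < x - 1" by (simp add: algebra_simps)
      moreover have "Re (\<phi> (complex_of_real x)) = Re b + a * x" by (simp add: aff \<alpha>a)
      ultimately show False using T1(2)[of "complex_of_real x"] xT by simp
    qed
    have a1: "a = 1"
    proof (rule ccontr)
      assume "a \<noteq> 1"
      then have "a < 1" using a_le by simp
      moreover have "a > 0" using re by (simp add: a_def)
      ultimately show False using dir_excl[OF F E l0 into, of b a] aff \<alpha>a by auto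
    qed
    have rb: "Re b \<ge> 0"
    proof (rule ccontr)
      assume "\<not> Re b \<ge> 0"
      then have d: "- Re b / 2 > 0" by simp
      obtain T where T: "T \<ge> 0" "\<And>w. Re w \<le> -T \<Longrightarrow> Re w - (- Re b / 2) \<le> Re (\<phi> w)"
        using re_bounds(1)[OF F E B d] by auto
      have "Re (\<phi> (complex_of_real (-T))) = - T + Re b" by (simp add: aff \<alpha>a a1)
      then show False using T(2)[of "complex_of_real (-T)"] \<open>\<not> Re b \<ge> 0\<close> by simp
    qed
    have "\<exists>b. Re b \<ge> 0 \<and> (\<forall>z. \<phi> z = z + b)" using rb aff \<alpha>a a1 by (intro exI[of _ b]) (simp add: add.commute)
    then show ?thesis using excl by blast
  qed
qed


end
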